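(* For every integer $R$ with $0\le R<\ell$ and every $y\in\{0,1\}^n$ with $y\ne0^n$, $$\Big\|\sum_{o\in[R]}\big(\mathrm{id}-\mathsf{QE}_{=o}\big)\cdot\tilde H_y\cdot\mathsf{QEC}_{(R,=o)}\Big\|_{\mathrm{op}}\le\frac{R^5}{\sqrt\ell}.$$
   Context: $[m]=\{0,1,\dots,m-1\}$. Bosonic setting with $2^n$ modes indexed by $\{0,1\}^n$: position operators $\hat a_x,\hat a_x^\dagger$ with standard bosonic commutation relations, vacuum $|\mathrm{vac}\rangle$, momentum operators $\tilde a_y=2^{-n/2}\sum_x(-1)^{x\cdot y}\hat a_x$ and $\tilde a_y^\dagger$ likewise, momentum Fock states $|u\rangle=\prod_y(\tilde a_y^\dagger)^{u_y}(u_y!)^{-1/2}|\mathrm{vac}\rangle$. Work in the $\ell$-boson subspace ($\sum_yu_y=\ell$). $\tilde H_y=\frac1\ell\sum_{x,x'}\tilde a^\dagger_{x\oplus y}\tilde a^\dagger_{x'\oplus y}\tilde a_x\tilde a_{x'}$. $\mathsf{Con}_R$ projects onto momentum Fock states with $u_{0^n}\ge\ell-R$; $\mathsf{QE}_{=o}$ projects onto those with exactly $o$ odd entries $u_y$ among $y\ne0^n$; $\mathsf{QEC}_{(R,=o)}=\mathsf{Con}_R\mathsf{QE}_{=o}$. *)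

theory Defs
  imports "HOL-Analysis.Analysis"
begin

text \<open>Modes are indexed by bit strings in {0,1}^n, encoded as natural numbers
  x < 2^n (bit i of x is the i-th coordinate); x \<oplus> y is bitwise xor, and
  0^n is the number 0.  A momentum Fock state |u> is given by its occupation
  function u :: nat \<Rightarrow> nat (u y = number of bosons in momentum mode y).\<close>

type_synonym occ = "nat \<Rightarrow> nat"
type_synonym fstate = "occ \<Rightarrow> complex"
type_synonym fop = "fstate \<Rightarrow> fstate"

definition fock_basis :: "nat \<Rightarrow> nat \<Rightarrow> occ set" where
  "fock_basis n ell = {u. (\<forall>z. 2^n \<le> z \<longrightarrow> u z = 0) \<and> (\<Sum>y<2^n. u y) = ell}"

definition boson_space :: "nat \<Rightarrow> nat \<Rightarrow> fstate set" where
  "boson_space n ell = {\<psi>. \<forall>v. v \<notin> fock_basis n ell \<longrightarrow> \<psi> v = 0}"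

definition fnorm :: "nat \<Rightarrow> nat \<Rightarrow> fstate \<Rightarrow> real" where
  "fnorm n ell \<psi> = sqrt (\<Sum>v\<in>fock_basis n ell. (cmod (\<psi> v))\<^sup>2)"

text \<open>Momentum annihilation operator: a_x |u> = sqrt(u_x) |u - e_x>.\<close>
definition ann :: "nat \<Rightarrow> fop" where
  "ann x \<psi> = (\<lambda>v. complex_of_real (sqrt (real (v x + 1))) * \<psi> (v(x := v x + 1)))"

text \<open>Momentum creation operator: a_x^dagger |u> = sqrt(u_x+1) |u + e_x>.\<close>
definition cre :: "nat \<Rightarrow> fop" where
  "cre x \<psi> = (\<lambda>v. if 0 < v x then complex_of_real (sqrt (real (v x))) * \<psi> (v(x := v x - 1)) else 0)"

definition Htilde :: "nat \<Rightarrow> nat \<Rightarrow> nat \<Rightarrow> fop" where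
  "Htilde n ell y \<psi> = (\<lambda>v. (1 / of_nat ell) *
     (\<Sum>x<2^n. \<Sum>x'<2^n.
        cre (xor x y) (cre (xor x' y) (ann x (ann x' \<psi>))) v))"

definition Con :: "nat \<Rightarrow> nat \<Rightarrow> fop" where
  "Con ell R \<psi> = (\<lambda>v. if ell - R \<le> v 0 then \<psi> v else 0)"

definition odd_count :: "nat \<Rightarrow> occ \<Rightarrow> nat" where
  "odd_count n v = card {y. 0 < y \<and> y < 2^n \<and> odd (v y)}"

definition QE :: "nat \<Rightarrow> nat \<Rightarrow> fop" where
  "QE n k \<psi> = (\<lambda>v. if odd_count n v = k then \<psi> v else 0)"

definition QEC :: "nat \<Rightarrow> nat \<Rightarrow> nat \<Rightarrow> nat \<Rightarrow> fop" where
  "QEC n ell R k = Con ell R \<circ> QE n k"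

definition op_norm :: "nat \<Rightarrow> nat \<Rightarrow> fop \<Rightarrow> real" where
  "op_norm n ell A = Sup {fnorm n ell (A \<psi>) | \<psi>. \<psi> \<in> boson_space n ell \<and> fnorm n ell \<psi> \<le> 1}"

end

theory Submission
  imports Defs
begin

lemma finite_fock: "finite (fock_basis n ell)"
proof -
  have "fock_basis n ell \<subseteq> {f. \<forall>x. (x \<in> {..<(2::nat)^n} \<longrightarrow> f x \<in> {..ell}) \<and> (x \<notin> {..<2^n} \<longrightarrow> f x = 0)}"
  proof
    fix u assume u: "u \<in> fock_basis n ell"
    have "u x \<le> ell" if "x < 2^n" for x
    proof -
      have "u x \<le> (\<Sum>y<2^n. u y)" using that by (intro member_le_sum) auto
      then show ?thesis using u by (simp add: fock_basis_def)
    qed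
    then show "u \<in> {f. \<forall>x. (x \<in> {..<(2::nat)^n} \<longrightarrow> f x \<in> {..ell}) \<and> (x \<notin> {..<2^n} \<longrightarrow> f x = 0)}"
      using u by (auto simp: fock_basis_def)
  qed
  moreover have "finite {f. \<forall>x. (x \<in> {..<(2::nat)^n} \<longrightarrow> f x \<in> {..ell}) \<and> (x \<notin> {..<2^n} \<longrightarrow> (f x::nat) = 0)}"
    by (rule finite_set_of_finite_funs) auto
  ultimately show ?thesis by (rule finite_subset)
qed

lemma xor_cancel: "xor (xor (x::nat) y) y = x"
  by (simp add: xor.assoc)

lemma xor_inj: "xor (x::nat) y = xor x' y \<Longrightarrow> x = x'"
  by (metis xor_cancel)

lemma xor_neq: "(y::nat) \<noteq> 0 \<Longrightarrow> xor x y \<noteq> x"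
  by (metis xor.left_neutral xor.assoc xor_self_eq xor.commute)

definition Wf :: "nat \<Rightarrow> nat \<Rightarrow> nat \<Rightarrow> occ \<Rightarrow> occ" where
  "Wf y x x' v = (let a = xor x y; b = xor x' y; v1 = v(a := v a - 1); v2 = v1(b := v1 b - 1);
      v3 = v2(x := v2 x + 1) in v3(x' := v3 x' + 1))"

definition Cf :: "nat \<Rightarrow> nat \<Rightarrow> nat \<Rightarrow> occ \<Rightarrow> real" where
  "Cf y x x' v = (let a = xor x y; b = xor x' y; v1 = v(a := v a - 1); v2 = v1(b := v1 b - 1);
      v3 = v2(x := v2 x + 1) in
      if 0 < v a \<and> 0 < v1 b then sqrt (real (v a)) * sqrt (real (v1 b)) * sqrt (real (v2 x + 1))
         * sqrt (real (v3 x' + 1)) else 0)"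

lemma cre_ann: "cre (xor x y) (cre (xor x' y) (ann x (ann x' \<phi>))) v
   = complex_of_real (Cf y x x' v) * \<phi> (Wf y x x' v)"
  unfolding cre_def ann_def Cf_def Wf_def Let_def by simp

lemma Cf_nonneg: "0 \<le> Cf y x x' v"
  unfolding Cf_def Let_def by simp

lemma Cf_nz: "Cf y x x' v \<noteq> 0 \<Longrightarrow> 0 < v (xor x y) \<and> 0 < (v(xor x y := v (xor x y) - 1)) (xor x' y)"
  unfolding Cf_def Let_def by (auto split: if_splits)

lemma W_int:
  assumes "Cf y x x' v \<noteq> 0"
  shows "int (Wf y x x' v m) = int (v m) - of_bool (m = xor x y) - of_bool (m = xor x' y)
     + of_bool (m = x) + of_bool (m = x')"
  using Cf_nz[OF assms] unfolding Wf_def Let_def by (auto split: if_splits)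

lemma W_inj:
  assumes "Cf y x x' v \<noteq> 0" "Cf y x x' v' \<noteq> 0" "Wf y x x' v = Wf y x x' v'"
  shows "v = v'"
proof
  fix m
  have "int (v m) = int (v' m)" using W_int[OF assms(1), of m] W_int[OF assms(2), of m] assms(3) by simp
  then show "v m = v' m" by simp
qed

lemma W_sq:
  assumes "y \<noteq> 0" "x \<noteq> x'" "x' \<noteq> xor x y" "Cf y x x' v \<noteq> 0"
  shows "(Cf y x x' v)^2 = real (Wf y x x' v x * Wf y x x' v x' * (Wf y x x' v (xor x y) + 1) * (Wf y x x' v (xor x' y) + 1))"
proof -
  have d1: "xor x y \<noteq> x" "xor x' y \<noteq> x'" using xor_neq assms(1) by auto
  have d2: "xor x y \<noteq> xor x' y" using xor_inj assms(2) by blast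
  have d3: "xor x' y \<noteq> x" using assms(3) xor_cancel by metis
  have d4: "xor x y \<noteq> x'" using assms(3) by auto
  have nz: "0 < v (xor x y)" "0 < v (xor x' y)" using Cf_nz[OF assms(4)] d2 by auto
  have "Cf y x x' v = sqrt (real (v (xor x y))) * sqrt (real (v (xor x' y))) * sqrt (real (v x + 1)) * sqrt (real (v x' + 1))"
    using d1 d2 d3 d4 nz assms(2) unfolding Cf_def Let_def by simp
  then have "(Cf y x x' v)^2 = real (v (xor x y)) * real (v (xor x' y)) * real (v x + 1) * real (v x' + 1)"
    by (simp add: power_mult_distrib)
  moreover have "Wf y x x' v x = v x + 1" "Wf y x x' v x' = v x' + 1"
     "Wf y x x' v (xor x y) + 1 = v (xor x y)" "Wf y x x' v (xor x' y) + 1 = v (xor x' y)"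
    using W_int[OF assms(4), of x] W_int[OF assms(4), of x'] W_int[OF assms(4), of "xor x y"]
      W_int[OF assms(4), of "xor x' y"] d1 d2 d3 d4 assms(2) by auto
  ultimately show ?thesis by (simp add: algebra_simps)
qed

lemma W_bad:
  assumes "Cf y x x' v \<noteq> 0" "x = x' \<or> x' = xor x y"
  shows "odd_count n (Wf y x x' v) = odd_count n v"
proof -
  have "odd (Wf y x x' v m) \<longleftrightarrow> odd (v m)" for m
  proof -
    have e: "int (Wf y x x' v m) = int (v m) - of_bool (m = xor x y) - of_bool (m = xor x' y)
     + of_bool (m = x) + of_bool (m = x')" by (rule W_int[OF assms(1)])
    show ?thesis
    proof (cases "x = x'")
      case True
      then have "int (Wf y x x' v m) = int (v m) + 2 * (of_bool (m = x) - of_bool (m = xor x y))"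
        using e by simp
      then have "odd (int (Wf y x x' v m)) \<longleftrightarrow> odd (int (v m))" by presburger
      then show ?thesis by simp
    next
      case False
      then have "x' = xor x y" using assms(2) by auto
      then have "xor x' y = x" by (simp add: xor_cancel)
      then have "int (Wf y x x' v m) = int (v m)" using e \<open>x' = xor x y\<close> by simp
      then show ?thesis by simp
    qed
  qed
  then show ?thesis unfolding odd_count_def by simp
qed

lemma W_0:
  assumes "Cf y x x' v \<noteq> 0" "x \<noteq> x'"
  shows "Wf y x x' v 0 \<le> v 0 + 1"
proof -
  have "int (Wf y x x' v 0) \<le> int (v 0) + 1"
    using W_int[OF assms(1), of 0] assms(2) by (simp add: of_bool_def split: if_splits)
  then show ?thesis by simp
qed

definition psi' :: "nat \<Rightarrow> nat \<Rightarrow> nat \<Rightarrow> fstate \<Rightarrow> fstate" where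
  "psi' n ell R \<psi> w = (if ell - R \<le> w 0 \<and> odd_count n w < R then \<psi> w else 0)"

definition gf :: "nat \<Rightarrow> nat \<Rightarrow> nat \<Rightarrow> nat \<Rightarrow> fstate \<Rightarrow> occ \<Rightarrow> nat \<Rightarrow> nat \<Rightarrow> complex" where
  "gf n ell R y \<psi> v x x' = (if odd_count n v \<noteq> odd_count n (Wf y x x' v)
      then complex_of_real (Cf y x x' v) * psi' n ell R \<psi> (Wf y x x' v) else 0)"

lemma repr:
  "(\<Sum>k<R. Htilde n ell y (QEC n ell R k \<psi>) v - QE n k (Htilde n ell y (QEC n ell R k \<psi>)) v)
   = (1 / of_nat ell) * (\<Sum>x<2^n. \<Sum>x'<2^n. gf n ell R y \<psi> v x x')"
proof -
  define c where "c = (1 / of_nat ell :: complex)"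
  have q: "QEC n ell R k \<psi> w = (if ell - R \<le> w 0 then (if odd_count n w = k then \<psi> w else 0) else 0)" for k w
    by (simp add: QEC_def Con_def QE_def)
  have "(\<Sum>k<R. Htilde n ell y (QEC n ell R k \<psi>) v - QE n k (Htilde n ell y (QEC n ell R k \<psi>)) v)
     = (\<Sum>k<R. of_bool (odd_count n v \<noteq> k) * (c * (\<Sum>x<2^n. \<Sum>x'<2^n.
          complex_of_real (Cf y x x' v) * QEC n ell R k \<psi> (Wf y x x' v))))"
    by (intro sum.cong refl) (simp add: QE_def Htilde_def cre_ann c_def)
  also have "\<dots> = c * (\<Sum>x<2^n. \<Sum>x'<2^n. \<Sum>k<R. of_bool (odd_count n v \<noteq> k) *
          (complex_of_real (Cf y x x' v) * QEC n ell R k \<psi> (Wf y x x' v)))"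
    by (simp add: sum_distrib_left mult.left_commute sum.swap[of _ "{..<R}"])
  also have "\<dots> = c * (\<Sum>x<2^n. \<Sum>x'<2^n. gf n ell R y \<psi> v x x')"
  proof (intro arg_cong[where f="\<lambda>t. c * t"] sum.cong refl)
    fix x x'
    let ?w = "Wf y x x' v"
    have "(\<Sum>k<R. of_bool (odd_count n v \<noteq> k) * (complex_of_real (Cf y x x' v) * QEC n ell R k \<psi> ?w))
       = (\<Sum>k<R. if k = odd_count n ?w then of_bool (odd_count n v \<noteq> odd_count n ?w) *
            (complex_of_real (Cf y x x' v) * (if ell - R \<le> ?w 0 then \<psi> ?w else 0)) else 0)"
      by (intro sum.cong refl) (auto simp: q)
    also have "\<dots> = gf n ell R y \<psi> v x x'"
      by (simp add: gf_def psi'_def)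
    finally show "(\<Sum>k<R. of_bool (odd_count n v \<noteq> k) * (complex_of_real (Cf y x x' v) * QEC n ell R k \<psi> ?w))
       = gf n ell R y \<psi> v x x'" .
  qed
  finally show ?thesis by (simp add: c_def)
qed

lemma psi'_nz:
  assumes "\<psi> \<in> boson_space n ell" "psi' n ell R \<psi> w \<noteq> 0"
  shows "ell - R \<le> w 0" "odd_count n w < R" "w \<in> fock_basis n ell"
  using assms by (auto simp: psi'_def boson_space_def split: if_splits)

lemma gf_nz:
  assumes "gf n ell R y \<psi> v x x' \<noteq> 0"
  shows "Cf y x x' v \<noteq> 0" "x \<noteq> x'" "x' \<noteq> xor x y" "psi' n ell R \<psi> (Wf y x x' v) \<noteq> 0"
proof -
  show c: "Cf y x x' v \<noteq> 0" using assms by (auto simp: gf_def split: if_splits)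
  show "psi' n ell R \<psi> (Wf y x x' v) \<noteq> 0" using assms by (auto simp: gf_def split: if_splits)
  have ne: "odd_count n v \<noteq> odd_count n (Wf y x x' v)" using assms by (auto simp: gf_def split: if_splits)
  show "x \<noteq> x'" using W_bad[OF c, of n] ne by auto
  show "x' \<noteq> xor x y" using W_bad[OF c, of n] ne by auto
qed

lemma card_pos_le_sum:
  fixes v :: "nat \<Rightarrow> nat"
  assumes "finite A"
  shows "card {m \<in> A. 0 < v m} \<le> sum v A"
proof -
  have "card {m \<in> A. 0 < v m} = (\<Sum>m\<in>{m \<in> A. 0 < v m}. 1)" by simp
  also have "\<dots> \<le> (\<Sum>m\<in>{m \<in> A. 0 < v m}. v m)" by (intro sum_mono) auto
  also have "\<dots> \<le> sum v A" by (intro sum_mono2 assms) auto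
  finally show ?thesis .
qed

lemma sum_split0:
  fixes v :: "nat \<Rightarrow> nat"
  shows "sum v {..<(2::nat)^n} = v 0 + sum v ({..<2^n} - {0})"
  by (subst sum.remove[of _ 0]) auto

lemma count_bound:
  assumes "v \<in> fock_basis n ell" "\<psi> \<in> boson_space n ell" "R < ell"
  shows "card {p \<in> {..<(2::nat)^n} \<times> {..<2^n}. gf n ell R y \<psi> v (fst p) (snd p) \<noteq> 0} \<le> (R+2)^2"
    (is "card ?S \<le> _")
proof (cases "?S = {}")
  case True then show ?thesis by (simp only: True card.empty)
next
  case False
  then obtain x x' where p: "(x,x') \<in> ?S" by auto
  then have g: "gf n ell R y \<psi> v x x' \<noteq> 0" by auto
  have "ell - R \<le> Wf y x x' v 0" using psi'_nz[OF assms(2) gf_nz(4)[OF g]] by simp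
  moreover have "Wf y x x' v 0 \<le> v 0 + 1" using W_0[OF gf_nz(1,2)[OF g]] .
  ultimately have v0: "ell \<le> v 0 + 1 + R" using assms(3) by linarith
  define T where "T = {m \<in> {..<(2::nat)^n}. 0 < v m}"
  have fin: "finite T" by (simp add: T_def)
  have "T \<subseteq> insert 0 {m \<in> {..<(2::nat)^n} - {0}. 0 < v m}" by (auto simp: T_def)
  then have "card T \<le> card (insert 0 {m \<in> {..<(2::nat)^n} - {0}. 0 < v m})" by (intro card_mono) auto
  also have "\<dots> \<le> Suc (card {m \<in> {..<(2::nat)^n} - {0}. 0 < v m})" by (rule card_insert_le_m1) auto
  also have "card {m \<in> {..<(2::nat)^n} - {0}. 0 < v m} \<le> sum v ({..<2^n} - {0})"
    by (rule card_pos_le_sum) auto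
  also have "sum v ({..<2^n} - {0}) = ell - v 0"
    using sum_split0[of v n] assms(1) by (simp add: fock_basis_def) linarith
  finally have cT: "card T \<le> R + 2" using v0 by linarith
  have "?S \<subseteq> (\<lambda>(a,b). (xor a y, xor b y)) ` (T \<times> T)"
  proof
    fix p assume pS: "p \<in> ?S"
    obtain a b where ab: "p = (a,b)" by (cases p)
    have ga: "gf n ell R y \<psi> v a b \<noteq> 0" "a < 2^n" "b < 2^n" using pS ab by auto
    have cz: "0 < v (xor a y) \<and> 0 < (v(xor a y := v (xor a y) - 1)) (xor b y)"
      using Cf_nz[OF gf_nz(1)[OF ga(1)]] .
    then have "0 < v (xor a y)" "0 < v (xor b y)" by (auto split: if_splits)
    moreover have "xor a y < 2^n" "xor b y < 2^n"
      using \<open>0 < v (xor a y)\<close> \<open>0 < v (xor b y)\<close> assms(1)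
      by (auto simp: fock_basis_def not_less[symmetric])
    ultimately have "(xor a y, xor b y) \<in> T \<times> T" by (auto simp: T_def)
    moreover have "p = (\<lambda>(a,b). (xor a y, xor b y)) (xor a y, xor b y)" using ab by (simp add: xor_cancel)
    ultimately show "p \<in> (\<lambda>(a,b). (xor a y, xor b y)) ` (T \<times> T)" by blast
  qed
  then have "card ?S \<le> card ((\<lambda>(a,b). (xor a y, xor b y)) ` (T \<times> T))"
    by (intro card_mono finite_imageI) (auto simp: fin)
  also have "\<dots> \<le> card (T \<times> T)" by (rule card_image_le) (simp add: fin)
  also have "\<dots> = card T * card T" by (simp add: card_cartesian_product)
  also have "\<dots> \<le> (R+2) * (R+2)" using cT by (intro mult_le_mono) auto
  finally show ?thesis by (simp add: power2_eq_square)
qed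

definition Df :: "nat \<Rightarrow> occ \<Rightarrow> nat \<Rightarrow> nat \<Rightarrow> nat" where
  "Df y w x x' = (if x \<noteq> x' \<and> x' \<noteq> xor x y then w x * w x' * (w (xor x y) + 1) * (w (xor x' y) + 1) else 0)"

lemma sum_g_bound:
  assumes "y \<noteq> 0" "\<psi> \<in> boson_space n ell"
  shows "(\<Sum>v\<in>fock_basis n ell. (cmod (gf n ell R y \<psi> v x x'))\<^sup>2)
     \<le> (\<Sum>w\<in>fock_basis n ell. real (Df y w x x') * (cmod (psi' n ell R \<psi> w))\<^sup>2)"
proof -
  define B where "B = fock_basis n ell"
  define V where "V = {v \<in> B. gf n ell R y \<psi> v x x' \<noteq> 0}"
  define h where "h w = real (Df y w x x') * (cmod (psi' n ell R \<psi> w))\<^sup>2" for w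
  have finB: "finite B" by (simp add: B_def finite_fock)
  have "(\<Sum>v\<in>B. (cmod (gf n ell R y \<psi> v x x'))\<^sup>2) = (\<Sum>v\<in>V. (cmod (gf n ell R y \<psi> v x x'))\<^sup>2)"
    by (rule sum.mono_neutral_right) (auto simp: V_def finB)
  also have "\<dots> = (\<Sum>v\<in>V. h (Wf y x x' v))"
  proof (rule sum.cong[OF refl])
    fix v assume "v \<in> V"
    then have g: "gf n ell R y \<psi> v x x' \<noteq> 0" by (simp add: V_def)
    note nz = gf_nz[OF g]
    have "gf n ell R y \<psi> v x x' = complex_of_real (Cf y x x' v) * psi' n ell R \<psi> (Wf y x x' v)"
      using g by (auto simp: gf_def split: if_splits)
    then have "(cmod (gf n ell R y \<psi> v x x'))\<^sup>2 = (Cf y x x' v)\<^sup>2 * (cmod (psi' n ell R \<psi> (Wf y x x' v)))\<^sup>2"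
      by (simp add: norm_mult power_mult_distrib)
    also have "\<dots> = h (Wf y x x' v)"
      unfolding h_def Df_def using W_sq[OF assms(1) nz(2) nz(3) nz(1)] nz(2,3) by simp
    finally show "(cmod (gf n ell R y \<psi> v x x'))\<^sup>2 = h (Wf y x x' v)" .
  qed
  also have "\<dots> = (\<Sum>w\<in>Wf y x x' ` V. h w)"
  proof -
    have "inj_on (Wf y x x') V"
    proof (rule inj_onI)
      fix v v' assume "v \<in> V" "v' \<in> V" "Wf y x x' v = Wf y x x' v'"
      then show "v = v'" using W_inj[OF gf_nz(1) gf_nz(1)] by (auto simp: V_def)
    qed
    then show ?thesis by (simp add: sum.reindex o_def)
  qed
  also have "\<dots> \<le> (\<Sum>w\<in>B. h w)"
  proof (rule sum_mono2[OF finB])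
    show "Wf y x x' ` V \<subseteq> B"
    proof
      fix w assume "w \<in> Wf y x x' ` V"
      then obtain v where "v \<in> V" "w = Wf y x x' v" by auto
      then show "w \<in> B" using psi'_nz(3)[OF assms(2) gf_nz(4)] by (auto simp: V_def B_def)
    qed
    show "\<And>b. b \<in> B - Wf y x x' ` V \<Longrightarrow> 0 \<le> h b" by (simp add: h_def)
  qed
  finally show ?thesis by (simp add: B_def h_def)
qed

lemma Df_point:
  fixes w :: occ and s ell :: nat
  assumes wle: "\<And>m. m \<noteq> 0 \<Longrightarrow> w m \<le> s" and w0: "w 0 \<le> ell" and sle: "s \<le> ell" and y: "y \<noteq> 0"
  defines "w' \<equiv> \<lambda>m. if m = 0 then 0 else w m"
  shows "Df y w x x' \<le> ell*(s+1)^2*(of_bool(x=0)*w' x' + of_bool(x'=0)*w' x) + (ell+1)*(s+1)*(w' x * w' x')"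
proof (cases "x \<noteq> x' \<and> x' \<noteq> xor x y")
  case False
  then have "Df y w x x' = 0" by (auto simp: Df_def)
  then show ?thesis by simp
next
  case True
  then have ne: "x \<noteq> x'" "x' \<noteq> xor x y" by auto
  have bx: "xor x' y \<noteq> x" using ne(2) xor_cancel by metis
  have ab: "xor x y \<noteq> xor x' y" using ne(1) xor_inj by blast
  have D: "Df y w x x' = w x * w x' * ((w (xor x y) + 1) * (w (xor x' y) + 1))"
    using ne by (simp add: Df_def algebra_simps)
  show ?thesis
  proof (cases "x = 0")
    case True
    then have x'0: "x' \<noteq> 0" using ne by auto
    have a: "xor x y = y" using True by simp
    have e1: "(w (xor x y) + 1) * (w (xor x' y) + 1) \<le> (s+1) * (s+1)"
      using a y bx True wle[of y] wle[of "xor x' y"] by (intro mult_le_mono) auto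
    have e2: "w x * w x' \<le> ell * w' x'" using True x'0 w0 by (simp add: w'_def)
    have "Df y w x x' \<le> ell * w' x' * ((s+1) * (s+1))"
      unfolding D by (rule mult_le_mono[OF e2 e1])
    also have "\<dots> \<le> ell*(s+1)^2*(of_bool(x=0)*w' x' + of_bool(x'=0)*w' x)"
      using True x'0 by (simp add: power2_eq_square w'_def algebra_simps)
    finally show ?thesis by linarith
  next
    case xn0: False
    show ?thesis
    proof (cases "x' = 0")
      case True
      have a: "xor x y \<noteq> 0" using ne(2) True by auto
      have b: "xor x' y = y" using True by simp
      have e1: "(w (xor x y) + 1) * (w (xor x' y) + 1) \<le> (s+1) * (s+1)"
        using a b y wle[of y] wle[of "xor x y"] by (intro mult_le_mono) auto
      have e2: "w x * w x' \<le> w' x * ell" using True xn0 w0 by (simp add: w'_def)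
      have "Df y w x x' \<le> w' x * ell * ((s+1) * (s+1))"
        unfolding D by (rule mult_le_mono[OF e2 e1])
      also have "\<dots> \<le> ell*(s+1)^2*(of_bool(x=0)*w' x' + of_bool(x'=0)*w' x)"
        using True xn0 by (simp add: power2_eq_square w'_def algebra_simps)
      finally show ?thesis by linarith
    next
      case x'n0: False
      have "(w (xor x y) + 1) * (w (xor x' y) + 1) \<le> (ell+1)*(s+1)"
      proof (cases "xor x y = 0")
        case True
        then have "xor x' y \<noteq> 0" using ab by auto
        then show ?thesis using True w0 wle[of "xor x' y"] by (intro mult_le_mono) auto
      next
        case False
        note f = False
        show ?thesis
        proof (cases "xor x' y = 0")
          case True
          have "(w (xor x y) + 1) * (w (xor x' y) + 1) \<le> (s+1) * (ell+1)"
            using True f w0 wle[of "xor x y"] by (intro mult_le_mono) auto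
          then show ?thesis by (simp add: mult.commute)
        next
          case False
          then show ?thesis using f wle[of "xor x y"] wle[of "xor x' y"] sle by (intro mult_le_mono) auto
        qed
      qed
      then have "Df y w x x' \<le> w x * w x' * ((ell+1)*(s+1))" unfolding D by (rule mult_le_mono[OF le_refl])
      also have "\<dots> = (ell+1)*(s+1)*(w' x * w' x')" using xn0 x'n0 by (simp add: w'_def)
      finally show ?thesis by linarith
    qed
  qed
qed

lemma Df_sum_bound:
  assumes "w \<in> fock_basis n ell" "y \<noteq> 0"
  shows "(\<Sum>x<(2::nat)^n. \<Sum>x'<2^n. Df y w x x') \<le> 2*ell*(ell - w 0)*(ell - w 0 + 1)^2 + (ell+1)*(ell - w 0 + 1)*(ell - w 0)^2"
proof -
  define s where "s = ell - w 0"
  define w' where "w' = (\<lambda>m. if m = 0 then 0 else w m)"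
  have sumw: "sum w {..<2^n} = ell" and out: "\<And>z. 2^n \<le> z \<Longrightarrow> w z = 0" using assms(1) by (auto simp: fock_basis_def)
  have sw: "sum w ({..<2^n} - {0}) = s" using sum_split0[of w n] sumw by (simp add: s_def)
  have w0: "w 0 \<le> ell" using sum_split0[of w n] sumw by simp
  have sle: "s \<le> ell" by (simp add: s_def)
  have wle: "w m \<le> s" if "m \<noteq> 0" for m
  proof (cases "m < 2^n")
    case True
    then have "w m \<le> sum w ({..<2^n} - {0})" using that by (intro member_le_sum) auto
    then show ?thesis using sw by simp
  next
    case False then show ?thesis using out by simp
  qed
  have sw': "sum w' {..<2^n} = s"
    using sum_split0[of w' n] sw by (simp add: w'_def)
  have "(\<Sum>x<(2::nat)^n. \<Sum>x'<2^n. Df y w x x') \<le> (\<Sum>x<(2::nat)^n. \<Sum>x'<2^n.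
     ell*(s+1)^2*(of_bool(x=0)*w' x' + of_bool(x'=0)*w' x) + (ell+1)*(s+1)*(w' x * w' x'))"
    using Df_point[where w=w and s=s and ell=ell and y=y, OF wle w0 sle assms(2)] unfolding w'_def by (intro sum_mono) auto
  also have "\<dots> = ell*(s+1)^2*(s + s) + (ell+1)*(s+1)*(s * s)"
    by (simp add: sum.distrib sum_distrib_left[symmetric] sum_distrib_right[symmetric] sw' of_bool_def)
  also have "\<dots> = 2*ell * s*(s+1)^2 + (ell+1)*(s+1) * s^2"
    by (simp add: power2_eq_square algebra_simps)
  finally show ?thesis unfolding s_def .
qed

lemma poly_bound:
  fixes R ell :: nat
  assumes "2 \<le> R" "1 \<le> ell"
  shows "(R+2)^2 * (2*ell * R*(R+1)^2 + (ell+1)*(R+1) * R^2) \<le> ell * R^10"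
proof (cases "R = 2")
  case True then show ?thesis using assms(2) by simp
next
  case False
  then have R3: "3 \<le> R" using assms(1) by simp
  have a: "(R+2)^2 \<le> (2*R)^2" using R3 by (intro power_mono) auto
  have b: "(R+1)^2 \<le> (2*R)^2" using R3 by (intro power_mono) auto
  have c: "R+1 \<le> 2*R" "ell + 1 \<le> 2*ell" using R3 assms(2) by auto
  have d: "2*ell * R*(R+1)^2 \<le> 2*ell*R*(2*R)^2" using b by simp
  have e: "(ell+1)*(R+1) * R^2 \<le> (2*ell)*(2*R)*R^2" using c by (intro mult_le_mono) auto
  have "(R+2)^2 * (2*ell * R*(R+1)^2 + (ell+1)*(R+1) * R^2) \<le> (2*R)^2 * (2*ell*R*(2*R)^2 + (2*ell)*(2*R)*R^2)"
    by (rule mult_le_mono[OF a add_le_mono[OF d e]])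
  also have "\<dots> = ell * (48 * R^5)" by (simp add: power2_eq_square power_def algebra_simps eval_nat_numeral)
  also have "\<dots> \<le> ell * (R^5 * R^5)"
  proof -
    have "(3::nat)^5 \<le> R^5" using R3 by (rule power_mono) auto
    then have "48 \<le> R^5" by simp
    then show ?thesis by (intro mult_le_mono) auto
  qed
  also have "\<dots> = ell * R^10" by (simp flip: power_add)
  finally show ?thesis .
qed

lemma s_small:
  assumes "w \<in> fock_basis n ell" "ell - R \<le> w 0" "odd_count n w < R" "R < ell"
  shows "ell - w 0 \<le> R" "R \<le> 1 \<Longrightarrow> ell - w 0 = 0"
proof -
  show le: "ell - w 0 \<le> R" using assms(2,4) by linarith
  have sw: "sum w ({..<2^n} - {0}) = ell - w 0"
    using sum_split0[of w n] assms(1) by (simp add: fock_basis_def) linarith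
  assume R1: "R \<le> 1"
  then have oc: "odd_count n w = 0" using assms(3) by simp
  have fin: "finite {m. 0 < m \<and> m < 2^n \<and> odd (w m)}" by (rule finite_subset[of _ "{..<2^n}"]) auto
  have emp: "{m. 0 < m \<and> m < (2::nat)^n \<and> odd (w m)} = {}"
    using oc fin unfolding odd_count_def by simp
  have "w m = 0" if "m \<in> {..<2^n} - {0}" for m
  proof -
    have "w m \<le> sum w ({..<2^n} - {0})" using that by (intro member_le_sum) auto
    then have "w m \<le> 1" using sw le R1 by linarith
    moreover have "even (w m)" using emp that by auto
    ultimately show ?thesis by presburger
  qed
  then have "sum w ({..<2^n} - {0}) = 0" by simp
  then show "ell - w 0 = 0" using sw by simp
qed

lemma Mb_le:
  fixes s R ell :: nat
  assumes "s \<le> R" "R \<le> 1 \<Longrightarrow> s = 0"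
  shows "2*ell * s*(s+1)^2 + (ell+1)*(s+1) * s^2 \<le> (if R \<le> 1 then 0 else 2*ell * R*(R+1)^2 + (ell+1)*(R+1) * R^2)"
proof (cases "R \<le> 1")
  case True then show ?thesis using assms by simp
next
  case False
  have h1: "2*ell * s*(s+1)^2 \<le> 2*ell * R*(R+1)^2" using assms(1) by (intro mult_le_mono power_mono) auto
  have h2: "(ell+1)*(s+1) * s^2 \<le> (ell+1)*(R+1) * R^2" using assms(1) by (intro mult_le_mono power_mono) auto
  have eq: "(if R \<le> 1 then 0 else 2*ell * R*(R+1)^2 + (ell+1)*(R+1) * R^2) = 2*ell * R*(R+1)^2 + (ell+1)*(R+1) * R^2"
    using False by simp
  show ?thesis unfolding eq by (rule add_le_mono[OF h1 h2])
qed

lemma main_bound: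
  assumes "R < ell" "y \<noteq> 0" "\<psi> \<in> boson_space n ell" "fnorm n ell \<psi> \<le> 1"
  shows "fnorm n ell (\<lambda>v. \<Sum>k<R. Htilde n ell y (QEC n ell R k \<psi>) v
                          - QE n k (Htilde n ell y (QEC n ell R k \<psi>)) v) \<le> real R ^ 5 / sqrt (real ell)"
proof -
  define B where "B = fock_basis n ell"
  define P where "P = {..<(2::nat)^n} \<times> {..<(2::nat)^n}"
  define G where "G v p = gf n ell R y \<psi> v (fst p) (snd p)" for v p
  define MB where "MB = (if R \<le> 1 then 0 else 2*ell * R*(R+1)^2 + (ell+1)*(R+1) * R^2)"
  define A where "A = (\<lambda>v. \<Sum>k<R. Htilde n ell y (QEC n ell R k \<psi>) v
                          - QE n k (Htilde n ell y (QEC n ell R k \<psi>)) v)"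
  define c where "c = real ((R+2)^2) / (real ell)^2"
  have finB: "finite B" by (simp add: B_def finite_fock)
  have finP: "finite P" by (simp add: P_def)
  have ell0: "0 < ell" using assms(1) by simp
  have c0: "0 \<le> c" by (simp add: c_def)
  have npsi: "(\<Sum>w\<in>B. (cmod (\<psi> w))\<^sup>2) \<le> 1"
    using assms(4) by (simp add: fnorm_def B_def)
  have Arepr: "A v = (1 / of_nat ell) * (\<Sum>p\<in>P. G v p)" for v
    using repr[where R=R and n=n and ell=ell and y=y and \<psi>=\<psi> and v=v] by (simp add: A_def G_def P_def sum.cartesian_product split_def)
  have step1: "(cmod (A v))\<^sup>2 \<le> c * (\<Sum>p\<in>P. (cmod (G v p))\<^sup>2)" if "v \<in> B" for v
  proof -
    define S where "S = {p \<in> P. G v p \<noteq> 0}"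
    have SP: "S \<subseteq> P" by (auto simp: S_def)
    have finS: "finite S" using finP SP finite_subset by blast
    have cS: "card S \<le> (R+2)^2"
      using count_bound[OF that[unfolded B_def] assms(3) assms(1), of y] by (simp add: S_def P_def G_def)
    have "cmod (A v) \<le> (1 / real ell) * (\<Sum>p\<in>P. cmod (G v p))"
      unfolding Arepr by (simp add: norm_mult norm_divide sum_norm_le divide_right_mono norm_sum)
    also have "(\<Sum>p\<in>P. cmod (G v p)) = (\<Sum>p\<in>S. cmod (G v p))"
      by (rule sum.mono_neutral_right) (auto simp: S_def finP)
    finally have a1: "cmod (A v) \<le> (1 / real ell) * (\<Sum>p\<in>S. cmod (G v p))" .
    have CS: "(\<Sum>p\<in>S. cmod (G v p))\<^sup>2 \<le> (\<Sum>p\<in>S. (cmod (G v p))\<^sup>2) * real (card S)"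
      using Cauchy_Schwarz_ineq_sum[of "\<lambda>p. cmod (G v p)" "\<lambda>_. 1" S] by simp
    have "(\<Sum>p\<in>S. (cmod (G v p))\<^sup>2) \<le> (\<Sum>p\<in>P. (cmod (G v p))\<^sup>2)"
      by (rule sum_mono2[OF finP SP]) auto
    moreover have "real (card S) \<le> real ((R+2)^2)" using cS by (rule of_nat_mono)
    ultimately have "(\<Sum>p\<in>S. (cmod (G v p))\<^sup>2) * real (card S) \<le> (\<Sum>p\<in>P. (cmod (G v p))\<^sup>2) * real ((R+2)^2)"
      by (intro mult_mono) (auto intro: sum_nonneg)
    then have CS2: "(\<Sum>p\<in>S. cmod (G v p))\<^sup>2 \<le> (\<Sum>p\<in>P. (cmod (G v p))\<^sup>2) * real ((R+2)^2)"
      using CS by linarith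
    have "(cmod (A v))\<^sup>2 \<le> ((1 / real ell) * (\<Sum>p\<in>S. cmod (G v p)))\<^sup>2"
      using a1 by (intro power_mono) auto
    also have "\<dots> = (1 / real ell)^2 * (\<Sum>p\<in>S. cmod (G v p))\<^sup>2" by (simp add: power_divide)
    also have "\<dots> \<le> (1 / real ell)^2 * ((\<Sum>p\<in>P. (cmod (G v p))\<^sup>2) * real ((R+2)^2))"
      using CS2 by (intro mult_left_mono) auto
    also have "\<dots> = c * (\<Sum>p\<in>P. (cmod (G v p))\<^sup>2)" by (simp add: c_def power_divide)
    finally show ?thesis .
  qed
  have perw: "(cmod (psi' n ell R \<psi> w))\<^sup>2 * (\<Sum>p\<in>P. real (Df y w (fst p) (snd p))) \<le> (cmod (\<psi> w))\<^sup>2 * real MB"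
    if "w \<in> B" for w
  proof (cases "psi' n ell R \<psi> w = 0")
    case True then show ?thesis by simp
  next
    case False
    note nz = psi'_nz[OF assms(3) False]
    have eq: "psi' n ell R \<psi> w = \<psi> w" using False by (auto simp: psi'_def split: if_splits)
    have ss: "ell - w 0 \<le> R" "R \<le> 1 \<Longrightarrow> ell - w 0 = 0" using s_small[OF nz(3) nz(1) nz(2) assms(1)] by auto
    have "(\<Sum>p\<in>P. real (Df y w (fst p) (snd p))) = real (\<Sum>x<(2::nat)^n. \<Sum>x'<2^n. Df y w x x')"
      by (simp add: P_def sum.cartesian_product split_def)
    also have "\<dots> \<le> real MB"
    proof (rule of_nat_mono)
      show "(\<Sum>x<(2::nat)^n. \<Sum>x'<2^n. Df y w x x') \<le> MB"
        using le_trans[OF Df_sum_bound[OF nz(3) assms(2)] Mb_le[OF ss]] unfolding MB_def .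
    qed
    finally show ?thesis unfolding eq by (intro mult_left_mono) auto
  qed
  have "(\<Sum>v\<in>B. (cmod (A v))\<^sup>2) \<le> (\<Sum>v\<in>B. c * (\<Sum>p\<in>P. (cmod (G v p))\<^sup>2))"
    using step1 by (intro sum_mono) auto
  also have "\<dots> = c * (\<Sum>p\<in>P. \<Sum>v\<in>B. (cmod (G v p))\<^sup>2)"
    by (simp add: sum_distrib_left sum.swap[of _ B])
  also have "\<dots> \<le> c * (\<Sum>p\<in>P. \<Sum>w\<in>B. real (Df y w (fst p) (snd p)) * (cmod (psi' n ell R \<psi> w))\<^sup>2)"
  proof (rule mult_left_mono[OF sum_mono c0])
    fix p assume "p \<in> P"
    show "(\<Sum>v\<in>B. (cmod (G v p))\<^sup>2) \<le> (\<Sum>w\<in>B. real (Df y w (fst p) (snd p)) * (cmod (psi' n ell R \<psi> w))\<^sup>2)"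
      using sum_g_bound[OF assms(2,3), where x="fst p" and x'="snd p" and R=R] by (simp add: G_def B_def)
  qed
  also have "\<dots> = c * (\<Sum>w\<in>B. (cmod (psi' n ell R \<psi> w))\<^sup>2 * (\<Sum>p\<in>P. real (Df y w (fst p) (snd p))))"
  proof -
    have "(\<Sum>p\<in>P. \<Sum>w\<in>B. real (Df y w (fst p) (snd p)) * (cmod (psi' n ell R \<psi> w))\<^sup>2)
      = (\<Sum>w\<in>B. (\<Sum>p\<in>P. real (Df y w (fst p) (snd p))) * (cmod (psi' n ell R \<psi> w))\<^sup>2)"
      by (subst sum.swap) (simp add: sum_distrib_right)
    then show ?thesis by (simp add: mult.commute)
  qed
  also have "\<dots> \<le> c * (\<Sum>w\<in>B. (cmod (\<psi> w))\<^sup>2 * real MB)"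
    using perw c0 by (intro mult_left_mono sum_mono) auto
  also have "\<dots> = c * real MB * (\<Sum>w\<in>B. (cmod (\<psi> w))\<^sup>2)"
    by (simp add: sum_distrib_left mult.commute mult.left_commute mult.assoc)
  also have "\<dots> \<le> c * real MB * 1"
    using npsi c0 by (intro mult_left_mono) auto
  also have "\<dots> \<le> real R ^ 10 / real ell"
  proof -
    have "(R+2)^2 * MB \<le> ell * R^10"
    proof (cases "R \<le> 1")
      case True then show ?thesis by (simp add: MB_def)
    next
      case False then show ?thesis using poly_bound[of R ell] ell0 by (simp add: MB_def)
    qed
    then have "real ((R+2)^2) * real MB \<le> real ell * real R ^ 10"
      by (metis of_nat_le_iff of_nat_mult of_nat_power)
    then have "real ((R+2)^2) * real MB / (real ell)^2 \<le> real ell * real R ^ 10 / (real ell)^2"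
      by (intro divide_right_mono) auto
    also have "\<dots> = real R ^ 10 / real ell" using ell0 by (simp add: power2_eq_square)
    finally show ?thesis by (simp add: c_def)
  qed
  finally have tot: "(\<Sum>v\<in>B. (cmod (A v))\<^sup>2) \<le> real R ^ 10 / real ell" .
  have "fnorm n ell A = sqrt (\<Sum>v\<in>B. (cmod (A v))\<^sup>2)" by (simp add: fnorm_def B_def)
  also have "\<dots> \<le> sqrt (real R ^ 10 / real ell)" using tot by (rule real_sqrt_le_mono)
  also have "\<dots> = real R ^ 5 / sqrt (real ell)"
  proof -
    have "real R ^ 10 = (real R ^ 5)^2" by (simp flip: power_mult)
    then have "sqrt (real R ^ 10) = sqrt ((real R ^ 5)^2)" by simp
    also have "\<dots> = real R ^ 5" by (rule real_sqrt_unique) auto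
    finally have "sqrt (real R ^ 10) = real R ^ 5" .
    then show ?thesis by (simp add: real_sqrt_divide)
  qed
  finally show ?thesis by (simp add: A_def)
qed

theorem mainTheorem16:
  fixes n ell R y :: nat
  assumes "R < ell" and "y < 2^n" and "y \<noteq> 0"
  shows "op_norm n ell
           (\<lambda>\<psi> v. \<Sum>k<R. Htilde n ell y (QEC n ell R k \<psi>) v
                          - QE n k (Htilde n ell y (QEC n ell R k \<psi>)) v)
         \<le> real R ^ 5 / sqrt (real ell)"
  unfolding op_norm_def
proof (rule cSup_least)
  have "(\<lambda>_. 0) \<in> boson_space n ell" by (simp add: boson_space_def)
  moreover have "fnorm n ell (\<lambda>_. 0) \<le> 1" by (simp add: fnorm_def)
  ultimately show "{fnorm n ell ((\<lambda>\<psi> v. \<Sum>k<R. Htilde n ell y (QEC n ell R k \<psi>) v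
                          - QE n k (Htilde n ell y (QEC n ell R k \<psi>)) v) \<psi>) | \<psi>.
        \<psi> \<in> boson_space n ell \<and> fnorm n ell \<psi> \<le> 1} \<noteq> {}" by blast
next
  fix t assume "t \<in> {fnorm n ell ((\<lambda>\<psi> v. \<Sum>k<R. Htilde n ell y (QEC n ell R k \<psi>) v
                          - QE n k (Htilde n ell y (QEC n ell R k \<psi>)) v) \<psi>) | \<psi>.
        \<psi> \<in> boson_space n ell \<and> fnorm n ell \<psi> \<le> 1}"
  then obtain \<psi> where "\<psi> \<in> boson_space n ell" "fnorm n ell \<psi> \<le> 1"
    "t = fnorm n ell (\<lambda>v. \<Sum>k<R. Htilde n ell y (QEC n ell R k \<psi>) v
                          - QE n k (Htilde n ell y (QEC n ell R k \<psi>)) v)" by auto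
  then show "t \<le> real R ^ 5 / sqrt (real ell)" using main_bound[OF assms(1) assms(3)] by simp
qed

end
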